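(* Let $m\ge 2$ and let $\mathcal{A}=\{\mathbf{A}^{(1)},\ldots,\mathbf{A}^{(m)}\}$ be POVMs on $\mathbb{C}^d$. Define $t_{\mathrm{PI}}=\max_{1\le l<l'\le m}\max\{t\in[0,1]:\{\Phi_t(\mathbf{A}^{(l)}),\Phi_t(\mathbf{A}^{(l')})\}\text{ is jointly measurable}\}$ and $t_{(m-1)\text{-POVM}}=\max\{t\in[0,1]:\Phi_t(\mathcal{A})\text{ is }\mathcal{B}\text{-simulable for some set }\mathcal{B}\text{ of at most }m-1\text{ POVMs on }\mathbb{C}^d\}$. Then $t_{\mathrm{PI}}\le t_{(m-1)\text{-POVM}}$.
   Context: A POVM on $\mathbb{C}^d$ with $n$ outcomes is a tuple $\mathbf{A}=(A_1,\ldots,A_n)$ of positive semidefinite operators with $\sum_a A_a=\mathbb{I}$. Given a set $\mathcal{B}=\{\mathbf{B}^{(j)}\}_j$ of POVMs, a POVM $\mathbf{A}$ with $n$ outcomes is $\mathcal{B}$-simulable if there are a probability distribution $p(j)$ over elements of $\mathcal{B}$ and conditional probability distributions $q(i|j,i')$ such that $A_i=\sum_j p(j)\sum_{i'}q(i|j,i')B^{(j)}_{i'}$ for all $i$; a set of POVMs is $\mathcal{B}$-simulable if each element is (distributions may depend on the element). The depolarising map is $\Phi_t(A)=tA+(1-t)\mathrm{Tr}(A)\mathbb{I}/d$, applied effectwise to POVMs and elementwise to sets. A pair $\{\mathbf{A},\mathbf{A}'\}$ is jointly measurable if there is a POVM $(M_{ab})$ with $\sum_b M_{ab}=A_a$,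 $\sum_a M_{ab}=A'_b$. *)

theory Defs
  imports "HOL-Analysis.Analysis"
begin

text \<open>Operators on C^d are d x d complex matrices, with d = CARD('d).
A POVM with n outcomes is a pair (n, E) with effects E a for a < n.\<close>

type_synonym 'd cmat = "complex^'d^'d"
type_synonym 'd povm_data = "nat \<times> (nat \<Rightarrow> 'd cmat)"

definition psd :: "'d::finite cmat \<Rightarrow> bool" where
  "psd A \<longleftrightarrow> (\<forall>i j. A$i$j = cnj (A$j$i)) \<and>
     (\<forall>v :: complex^'d. 0 \<le> Re (\<Sum>i\<in>UNIV. \<Sum>j\<in>UNIV. cnj (v$i) * A$i$j * v$j))"

definition is_povm :: "'d::finite povm_data \<Rightarrow> bool" where
  "is_povm P \<longleftrightarrow> (\<forall>a < fst P. psd (snd P a)) \<and> (\<Sum>a < fst P. snd P a) = mat 1"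

definition depol :: "real \<Rightarrow> 'd::finite cmat \<Rightarrow> 'd cmat" where
  "depol t A = (\<chi> i j. complex_of_real t * A$i$j +
      (if i = j then complex_of_real ((1 - t) / real CARD('d)) * trace A else 0))"

definition depol_povm :: "real \<Rightarrow> 'd::finite povm_data \<Rightarrow> 'd povm_data" where
  "depol_povm t P = (fst P, \<lambda>a. depol t (snd P a))"

definition jointly_measurable :: "'d::finite povm_data \<Rightarrow> 'd povm_data \<Rightarrow> bool" where
  "jointly_measurable P Q \<longleftrightarrow> (\<exists>M :: nat \<Rightarrow> nat \<Rightarrow> 'd cmat.
     (\<forall>a < fst P. \<forall>b < fst Q. psd (M a b)) \<and>
     (\<forall>a < fst P. (\<Sum>b < fst Q. M a b) = snd P a) \<and>
     (\<forall>b < fst Q. (\<Sum>a < fst P. M a b) = snd Q b))"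

definition simulable :: "'d::finite povm_data \<Rightarrow> (nat \<Rightarrow> 'd povm_data) \<Rightarrow> nat \<Rightarrow> bool" where
  "simulable P B k \<longleftrightarrow> (\<exists>(p :: nat \<Rightarrow> real) (q :: nat \<Rightarrow> nat \<Rightarrow> nat \<Rightarrow> real).
     (\<forall>j < k. 0 \<le> p j) \<and> (\<Sum>j < k. p j) = 1 \<and>
     (\<forall>j < k. \<forall>i' < fst (B j). (\<forall>i < fst P. 0 \<le> q i j i') \<and> (\<Sum>i < fst P. q i j i') = 1) \<and>
     (\<forall>i < fst P. snd P i = (\<Sum>j < k. p j *\<^sub>R (\<Sum>i' < fst (B j). q i j i' *\<^sub>R snd (B j) i'))))"

end

theory Submission
  imports Defs
begin

lemma psd_herm: "psd A \<Longrightarrow> A$i$j = cnj (A$j$i)"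
  unfolding psd_def by blast

lemma psd_diag:
  fixes A :: "'d::finite cmat"
  assumes "psd A" shows "A$i$i \<in> \<real>" "0 \<le> Re (A$i$i)"
proof -
  have "A$i$i = cnj (A$i$i)" using psd_herm[OF assms] .
  then show "A$i$i \<in> \<real>" by (metis Reals_cnj_iff)
  define v :: "complex^'d" where "v = (\<chi> k. if k = i then 1 else 0)"
  have "0 \<le> Re (\<Sum>a\<in>UNIV. \<Sum>b\<in>UNIV. cnj (v$a) * A$a$b * v$b)"
    using assms unfolding psd_def by blast
  also have "(\<Sum>a\<in>UNIV. \<Sum>b\<in>UNIV. cnj (v$a) * A$a$b * v$b) = A$i$i"
  proof -
    have vb: "v$b = (if b = i then 1 else 0)" for b by (simp add: v_def)
    have t1: "cnj (v$a) * A$a$b * v$b = (if b = i then cnj (v$a) * A$a$i else 0)" for a b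
      by (simp add: vb)
    have t2: "cnj (v$a) * A$a$i = (if a = i then A$i$i else 0)" for a
      by (simp add: vb)
    show ?thesis by (simp only: t1 t2 sum.delta' sum.delta finite UNIV_I if_True)
  qed
  finally show "0 \<le> Re (A$i$i)" .
qed

lemma psd_trace:
  fixes A :: "'d::finite cmat"
  assumes "psd A" shows "trace A = complex_of_real (Re (trace A))" "0 \<le> Re (trace A)"
proof -
  have "trace A \<in> \<real>" unfolding trace_def using psd_diag(1)[OF assms] by (auto intro: sum_in_Reals)
  then show "trace A = complex_of_real (Re (trace A))" by (simp add: complex_is_Real_iff)
  show "0 \<le> Re (trace A)" unfolding trace_def using psd_diag(2)[OF assms] by (simp add: Re_sum sum_nonneg)
qed


lemma trace_sum: "trace (\<Sum>a\<in>S. (f a :: 'd::finite cmat)) = (\<Sum>a\<in>S. trace (f a))"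
  by (induction S rule: infinite_finite_induct) (auto simp: trace_add trace_0[unfolded mat_0])

lemma depol_sum:
  fixes f :: "nat \<Rightarrow> 'd::finite cmat"
  shows "(\<Sum>a\<in>S. depol t (f a)) = depol t (\<Sum>a\<in>S. f a)"
proof -
  have "(\<Sum>a\<in>S. depol t (f a)) $ i $ j = depol t (\<Sum>a\<in>S. f a) $ i $ j" for i j
    by (cases "i = j") (simp_all add: depol_def sum_component sum.distrib sum_distrib_left trace_sum)
  then show ?thesis by (simp add: vec_eq_iff)
qed

lemma depol_I: "depol t (mat 1 :: 'd::finite cmat) = mat 1"
proof -
  have "depol t (mat 1 :: 'd::finite cmat) $ i $ j = mat 1 $ i $ j" for i j
    unfolding depol_def trace_I by (simp add: mat_def field_simps)
  then show ?thesis by (simp add: vec_eq_iff)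
qed

lemma psd_depol:
  fixes A :: "'d::finite cmat"
  assumes "psd A" "0 \<le> t" "t \<le> 1"
  shows "psd (depol t A)"
proof -
  define r where "r = (1 - t) / real CARD('d) * Re (trace A)"
  have r0: "0 \<le> r" unfolding r_def using assms psd_trace(2)[OF assms(1)] by simp
  have c: "complex_of_real ((1 - t) / real CARD('d)) * trace A = complex_of_real r"
    unfolding r_def by (subst psd_trace(1)[OF assms(1)]) simp
  have D: "depol t A = (\<chi> i j. complex_of_real t * A$i$j + (if i = j then complex_of_real r else 0))"
    unfolding depol_def c ..
  show ?thesis unfolding psd_def D
  proof (intro conjI allI)
    fix i j show "(\<chi> i j. complex_of_real t * A $ i $ j + (if i = j then complex_of_real r else 0)) $ i $ j =
         cnj ((\<chi> i j. complex_of_real t * A $ i $ j + (if i = j then complex_of_real r else 0)) $ j $ i)"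
      using psd_herm[OF assms(1), of i j] by simp
  next
    fix v :: "complex^'d"
    have e: "(\<Sum>i\<in>UNIV. \<Sum>j\<in>UNIV. cnj (v$i) * (complex_of_real t * A$i$j + (if i = j then complex_of_real r else 0)) * v$j)
      = complex_of_real t * (\<Sum>i\<in>UNIV. \<Sum>j\<in>UNIV. cnj (v$i) * A$i$j * v$j) + complex_of_real r * (\<Sum>i\<in>UNIV. cnj (v$i) * v$i)"
    proof -
      have m: "cnj a * (X + (if P then R else 0)) * b = cnj a * X * b + (if P then R * (cnj a * b) else 0)" for a b X R P
        by (simp add: algebra_simps)
      show ?thesis by (simp only: m) (simp add: sum.distrib sum_distrib_left mult.assoc mult.left_commute)
    qed
    have s: "(\<Sum>i\<in>UNIV. cnj (v$i) * v$i) = complex_of_real (\<Sum>i\<in>UNIV. (cmod (v$i))^2)"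
      unfolding of_real_sum complex_norm_square by (simp add: mult.commute)
    have q: "0 \<le> Re (\<Sum>i\<in>UNIV. \<Sum>j\<in>UNIV. cnj (v$i) * A$i$j * v$j)" using assms(1) unfolding psd_def by blast
    show "0 \<le> Re (\<Sum>i\<in>UNIV. \<Sum>j\<in>UNIV. cnj (v$i) *
        (\<chi> i j. complex_of_real t * A $ i $ j + (if i = j then complex_of_real r else 0)) $ i $ j * v$j)"
      using e s q r0 assms(2) by (simp add: sum_nonneg)
  qed
qed


lemma is_povm_depol:
  assumes "is_povm P" "0 \<le> t" "t \<le> 1"
  shows "is_povm (depol_povm t P)"
  using assms unfolding is_povm_def depol_povm_def
  by (simp add: psd_depol depol_sum depol_I)

lemma mat1_nz: "(mat 1 :: 'd::finite cmat) \<noteq> 0"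
proof
  assume "(mat 1 :: 'd::finite cmat) = 0"
  then have "(mat 1 :: 'd::finite cmat) $ undefined $ undefined = 0" by simp
  then show False by (simp add: mat_def)
qed

lemma povm_pos: "is_povm (P :: 'd::finite povm_data) \<Longrightarrow> 0 < fst P"
  using mat1_nz unfolding is_povm_def by (cases "fst P") auto

lemma sum_divmod:
  fixes g :: "nat \<Rightarrow> nat \<Rightarrow> 'a::comm_monoid_add"
  shows "(\<Sum>c < n*k. g (c div k) (c mod k)) = (\<Sum>a<n. \<Sum>b<k. g a b)"
proof -
  have "(\<Sum>c < n*k. g (c div k) (c mod k)) = (\<Sum>a<n. \<Sum>c\<in>{a*k..<a*k+k}. g (c div k) (c mod k))"
    by (rule sum.nat_group[symmetric])
  also have "\<dots> = (\<Sum>a<n. \<Sum>b<k. g a b)"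
  proof (rule sum.cong[OF refl])
    fix a
    have "(\<Sum>c\<in>{a*k..<a*k+k}. g (c div k) (c mod k)) = (\<Sum>b\<in>{0..<k}. g ((b + a*k) div k) ((b + a*k) mod k))"
      using sum.shift_bounds_nat_ivl[of "\<lambda>c. g (c div k) (c mod k)" 0 "a*k" k] by (simp add: add.commute)
    also have "\<dots> = (\<Sum>b<k. g a b)"
      by (rule sum.cong) auto
    finally show "(\<Sum>c\<in>{a*k..<a*k+k}. g (c div k) (c mod k)) = (\<Sum>b<k. g a b)" .
  qed
  finally show ?thesis .
qed

lemma simulable_by_one:
  fixes P :: "'d::finite povm_data"
  assumes "jz < k" "\<forall>j<k. \<forall>c<fst (B j). h j c < fst P"
    and "\<forall>i<fst P. snd P i = (\<Sum>c<fst (B jz). (if h jz c = i then 1 else 0) *\<^sub>R snd (B jz) c)"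
  shows "simulable P B k"
  unfolding simulable_def
proof (intro exI conjI allI impI)
  let ?p = "\<lambda>j. if j = jz then 1 else (0::real)"
  let ?q = "\<lambda>i j c. if h j c = i then 1 else (0::real)"
  show "\<And>j. j < k \<Longrightarrow> 0 \<le> ?p j" by simp
  show "(\<Sum>j<k. ?p j) = 1" using assms(1) by simp
  show "\<And>j i' i. j < k \<Longrightarrow> i' < fst (B j) \<Longrightarrow> i < fst P \<Longrightarrow> 0 \<le> ?q i j i'" by simp
  show "\<And>j i'. j < k \<Longrightarrow> i' < fst (B j) \<Longrightarrow> (\<Sum>i<fst P. ?q i j i') = 1"
    using assms(2) by (simp add: sum.delta')
  show "\<And>i. i < fst P \<Longrightarrow> snd P i = (\<Sum>j<k. ?p j *\<^sub>R (\<Sum>i'<fst (B j). ?q i j i' *\<^sub>R snd (B j) i'))"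
  proof -
    fix i assume i: "i < fst P"
    have e: "\<And>X :: 'd cmat. ?p j *\<^sub>R X = (if j = jz then X else 0)" for j by simp
    have "(\<Sum>j<k. ?p j *\<^sub>R (\<Sum>i'<fst (B j). ?q i j i' *\<^sub>R snd (B j) i'))
        = (\<Sum>i'<fst (B jz). ?q i jz i' *\<^sub>R snd (B jz) i')"
      unfolding e using assms(1) by (simp add: sum.delta')
    then show "snd P i = (\<Sum>j<k. ?p j *\<^sub>R (\<Sum>i'<fst (B j). ?q i j i' *\<^sub>R snd (B j) i'))"
      using assms(3) i by simp
  qed
qed


lemma scaleR_if01: "(if P then 1 else 0::real) *\<^sub>R (X :: 'd::finite cmat) = (if P then X else 0)"
  by simp

lemma joint_povm:
  fixes P Q :: "'d::finite povm_data"
  assumes "is_povm P" "is_povm Q" "jointly_measurable P Q"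
  obtains J where "is_povm J" "fst J = fst P * fst Q"
    "\<forall>i<fst P. snd P i = (\<Sum>c<fst J. (if c div fst Q = i then 1 else 0) *\<^sub>R snd J c)"
    "\<forall>i<fst Q. snd Q i = (\<Sum>c<fst J. (if c mod fst Q = i then 1 else 0) *\<^sub>R snd J c)"
proof -
  obtain M where M1: "\<forall>a < fst P. \<forall>b < fst Q. psd (M a b)"
     and M2: "\<forall>a < fst P. (\<Sum>b < fst Q. M a b) = snd P a"
     and M3: "\<forall>b < fst Q. (\<Sum>a < fst P. M a b) = snd Q b"
    using assms(3) unfolding jointly_measurable_def by blast
  define n where "n = fst P"
  define k where "k = fst Q"
  have k0: "0 < k" unfolding k_def using povm_pos[OF assms(2)] .
  define J where "J = (n * k, \<lambda>c. M (c div k) (c mod k))"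
  have "is_povm J" unfolding is_povm_def
  proof (intro conjI allI impI)
    fix c assume "c < fst J"
    then have "c < n * k" by (simp add: J_def)
    then have "c div k < n" "c mod k < k" using k0 by (auto simp: less_mult_imp_div_less)
    then show "psd (snd J c)" using M1 by (simp add: J_def n_def k_def)
  next
    have "(\<Sum>c<fst J. snd J c) = (\<Sum>a<n. \<Sum>b<k. M a b)"
      unfolding J_def by (simp add: sum_divmod)
    also have "\<dots> = (\<Sum>a<n. snd P a)" using M2 by (simp add: n_def k_def)
    also have "\<dots> = mat 1" using assms(1) by (simp add: is_povm_def n_def)
    finally show "(\<Sum>c<fst J. snd J c) = mat 1" .
  qed
  moreover have "fst J = fst P * fst Q" by (simp add: J_def n_def k_def)
  moreover have "\<forall>i<fst P. snd P i = (\<Sum>c<fst J. (if c div fst Q = i then 1 else 0) *\<^sub>R snd J c)"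
  proof (intro allI impI)
    fix i assume i: "i < fst P"
    have "(\<Sum>c<fst J. (if c div fst Q = i then 1 else 0) *\<^sub>R snd J c)
        = (\<Sum>a<n. \<Sum>b<k. (if a = i then M a b else 0))"
      unfolding J_def snd_conv fst_conv scaleR_if01 k_def[symmetric]
      using sum_divmod[where g="\<lambda>a b. (if a = i then M a b else 0)" and n=n and k=k] by simp
    also have "\<dots> = (\<Sum>a<n. if a = i then (\<Sum>b<k. M a b) else 0)" by (rule sum.cong) auto
    also have "\<dots> = (\<Sum>b<k. M i b)" using i by (simp add: sum.delta' n_def)
    also have "\<dots> = snd P i" using M2 i by (simp add: k_def)
    finally show "snd P i = (\<Sum>c<fst J. (if c div fst Q = i then 1 else 0) *\<^sub>R snd J c)" by simp
  qed
  moreover have "\<forall>i<fst Q. snd Q i = (\<Sum>c<fst J. (if c mod fst Q = i then 1 else 0) *\<^sub>R snd J c)"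
  proof (intro allI impI)
    fix i assume i: "i < fst Q"
    have "(\<Sum>c<fst J. (if c mod fst Q = i then 1 else 0) *\<^sub>R snd J c)
        = (\<Sum>a<n. \<Sum>b<k. (if b = i then M a b else 0))"
      unfolding J_def snd_conv fst_conv scaleR_if01 k_def[symmetric]
      using sum_divmod[where g="\<lambda>a b. (if b = i then M a b else 0)" and n=n and k=k] by simp
    also have "\<dots> = (\<Sum>a<n. M a i)" using i by (simp add: sum.delta' k_def)
    also have "\<dots> = snd Q i" using M3 i by (simp add: n_def)
    finally show "snd Q i = (\<Sum>c<fst J. (if c mod fst Q = i then 1 else 0) *\<^sub>R snd J c)" by simp
  qed
  ultimately show ?thesis using that by blast
qed

lemma scaleR_entry: "(s *\<^sub>R (X :: 'd::finite cmat))$i$j = complex_of_real s * X$i$j"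
  by (simp add: of_real_def)

lemma trace_scaleR: "trace (s *\<^sub>R (X :: 'd::finite cmat)) = complex_of_real s * trace X"
  unfolding trace_def scaleR_entry by (simp add: sum_distrib_left)

lemma psd_scaleR:
  fixes X :: "'d::finite cmat"
  assumes "psd X" "0 \<le> s" shows "psd (s *\<^sub>R X)"
proof -
  have h: "\<forall>i j. X$i$j = cnj (X$j$i)" using assms(1) unfolding psd_def by blast
  have q: "\<forall>v :: complex^'d. 0 \<le> Re (\<Sum>i\<in>UNIV. \<Sum>j\<in>UNIV. cnj (v$i) * X$i$j * v$j)"
    using assms(1) unfolding psd_def by blast
  show ?thesis unfolding psd_def
  proof (intro conjI allI)
    fix i j show "(s *\<^sub>R X)$i$j = cnj ((s *\<^sub>R X)$j$i)"
    proof -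
      have e: "X$i$j = cnj (X$j$i)" using h by blast
      show ?thesis unfolding scaleR_entry by (subst e) simp
    qed
  next
    fix v :: "complex^'d"
    have "(\<Sum>i\<in>UNIV. \<Sum>j\<in>UNIV. cnj (v$i) * (s *\<^sub>R X)$i$j * v$j)
        = complex_of_real s * (\<Sum>i\<in>UNIV. \<Sum>j\<in>UNIV. cnj (v$i) * X$i$j * v$j)"
      unfolding scaleR_entry by (simp add: sum_distrib_left mult.assoc mult.left_commute)
    then show "0 \<le> Re (\<Sum>i\<in>UNIV. \<Sum>j\<in>UNIV. cnj (v$i) * (s *\<^sub>R X)$i$j * v$j)"
      using q assms(2) by simp
  qed
qed

lemma depol0_trace: "trace X = trace Y \<Longrightarrow> depol 0 X = depol 0 (Y :: 'd::finite cmat)"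
  by (simp add: depol_def vec_eq_iff)

lemma jm_zero:
  fixes P Q :: "'d::finite povm_data"
  assumes "is_povm P" "is_povm Q"
  shows "jointly_measurable (depol_povm 0 P) (depol_povm 0 Q)"
proof -
  define s where "s b = Re (trace (snd Q b)) / real CARD('d)" for b
  have s0: "0 \<le> s b" if "b < fst Q" for b
    using psd_trace(2)[of "snd Q b"] assms(2) that unfolding s_def is_povm_def by simp
  have QI: "(\<Sum>b<fst Q. snd Q b) = mat 1" and PI: "(\<Sum>a<fst P. snd P a) = mat 1"
    using assms unfolding is_povm_def by auto
  have ssum: "(\<Sum>b<fst Q. s b) = 1"
  proof -
    have "(\<Sum>b<fst Q. s b) = Re (trace (\<Sum>b<fst Q. snd Q b)) / real CARD('d)"
      unfolding s_def trace_sum by (simp add: Re_sum sum_divide_distrib)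
    then show ?thesis unfolding QI trace_I by simp
  qed
  define M where "M a b = depol 0 (s b *\<^sub>R snd P a)" for a b
  show ?thesis unfolding jointly_measurable_def depol_povm_def fst_conv snd_conv
  proof (intro exI[of _ M] conjI allI impI)
    fix a b assume "a < fst P" "b < fst Q"
    then show "psd (M a b)" unfolding M_def
      using assms(1) s0 by (auto intro!: psd_depol psd_scaleR simp: is_povm_def)
  next
    fix a assume "a < fst P"
    have "(\<Sum>b<fst Q. M a b) = depol 0 ((\<Sum>b<fst Q. s b) *\<^sub>R snd P a)"
      unfolding M_def depol_sum scaleR_sum_left ..
    then show "(\<Sum>b<fst Q. M a b) = depol 0 (snd P a)" using ssum by simp
  next
    fix b assume b: "b < fst Q"
    have "(\<Sum>a<fst P. M a b) = depol 0 (s b *\<^sub>R mat 1)"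
      unfolding M_def depol_sum scaleR_sum_right[symmetric] PI ..
    also have "\<dots> = depol 0 (snd Q b)"
    proof (rule depol0_trace)
      have tr: "trace (snd Q b) = complex_of_real (Re (trace (snd Q b)))"
        using psd_trace(1)[of "snd Q b"] assms(2) b unfolding is_povm_def by blast
      have eq: "complex_of_real (x / real CARD('d)) * of_nat CARD('d) = complex_of_real x" for x
      proof -
        have "x / real CARD('d) * real CARD('d) = x" by simp
        then show ?thesis by (metis of_real_mult of_real_of_nat_eq)
      qed
      show "trace (s b *\<^sub>R (mat 1 :: 'd cmat)) = trace (snd Q b)"
        unfolding trace_scaleR trace_I s_def eq by (rule tr[symmetric])
    qed
    finally show "(\<Sum>a<fst P. M a b) = depol 0 (snd Q b)" .
  qed
qed


theorem mainTheorem11: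
  fixes m :: nat and A :: "nat \<Rightarrow> 'd::finite povm_data"
  assumes "m \<ge> 2"
    and "\<forall>l < m. is_povm (A l)"
  shows "Sup {t \<in> {0..1}. \<exists>l l'. l < l' \<and> l' < m \<and>
              jointly_measurable (depol_povm t (A l)) (depol_povm t (A l'))}
         \<le> Sup {t \<in> {0..1}. \<exists>k \<le> m - 1. \<exists>B :: nat \<Rightarrow> 'd povm_data.
              (\<forall>j < k. is_povm (B j)) \<and> (\<forall>l < m. simulable (depol_povm t (A l)) B k)}"
    (is "Sup ?L \<le> Sup ?R")
proof (rule cSup_subset_mono)
  have "jointly_measurable (depol_povm 0 (A 0)) (depol_povm 0 (A 1))"
    using assms by (intro jm_zero) auto
  moreover have "(0::nat) < 1 \<and> 1 < m" using assms(1) by auto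
  ultimately have "(0::real) \<in> ?L" by fastforce
  then show "?L \<noteq> {}" by blast
  show "bdd_above ?R" by (rule bdd_aboveI[of _ 1]) auto
  show "?L \<subseteq> ?R"
  proof
    fix t assume "t \<in> ?L"
    then obtain l l' where t01: "t \<in> {0..1}" and ll: "l < l'" "l' < m"
      and jm: "jointly_measurable (depol_povm t (A l)) (depol_povm t (A l'))" by blast
    define Pt where "Pt i = depol_povm t (A i)" for i
    have Ppovm: "is_povm (Pt i)" if "i < m" for i
      unfolding Pt_def using assms(2) that t01 by (intro is_povm_depol) auto
    have Pfst: "fst (Pt i) = fst (A i)" for i by (simp add: Pt_def depol_povm_def)
    have Ppos: "0 < fst (Pt i)" if "i < m" for i using povm_pos[OF Ppovm[OF that]] .
    obtain J where J1: "is_povm J" and J2: "fst J = fst (Pt l) * fst (Pt l')"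
      and J3: "\<forall>i<fst (Pt l). snd (Pt l) i = (\<Sum>c<fst J. (if c div fst (Pt l') = i then 1 else 0) *\<^sub>R snd J c)"
      and J4: "\<forall>i<fst (Pt l'). snd (Pt l') i = (\<Sum>c<fst J. (if c mod fst (Pt l') = i then 1 else 0) *\<^sub>R snd J c)"
      using joint_povm[OF Ppovm Ppovm jm[folded Pt_def]] ll by auto
    have n'0: "0 < fst (Pt l')" using Ppos ll by auto
    define B where "B j = (if j = l then J else if j < l' then Pt j else Pt (Suc j))" for j
    have Bpovm: "\<forall>j < m - 1. is_povm (B j)"
      unfolding B_def using J1 Ppovm by auto
    have Bl: "B l = J" by (simp add: B_def)
    have sim: "simulable (Pt i) B (m - 1)" if i: "i < m" for i
    proof -
      have lk: "l < m - 1" using ll by auto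
      consider "i = l" | "i = l'" | "i \<noteq> l" "i \<noteq> l'" by blast
      then show ?thesis
      proof cases
        case 1
        show ?thesis
        proof (rule simulable_by_one[where jz = l and h = "\<lambda>j c. if j = l then c div fst (Pt l') else 0"])
          show "l < m - 1" by fact
          show "\<forall>j<m - 1. \<forall>c<fst (B j). (if j = l then c div fst (Pt l') else 0) < fst (Pt i)"
            using 1 Ppos i J2 Bl by (auto simp: less_mult_imp_div_less)
          show "\<forall>ia<fst (Pt i). snd (Pt i) ia = (\<Sum>c<fst (B l). (if (if l = l then c div fst (Pt l') else 0) = ia then 1 else 0) *\<^sub>R snd (B l) c)"
            using 1 J3 Bl by simp
        qed
      next
        case 2
        show ?thesis
        proof (rule simulable_by_one[where jz = l and h = "\<lambda>j c. if j = l then c mod fst (Pt l') else 0"])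
          show "l < m - 1" by fact
          show "\<forall>j<m - 1. \<forall>c<fst (B j). (if j = l then c mod fst (Pt l') else 0) < fst (Pt i)"
            using 2 Ppos i n'0 by auto
          show "\<forall>ia<fst (Pt i). snd (Pt i) ia = (\<Sum>c<fst (B l). (if (if l = l then c mod fst (Pt l') else 0) = ia then 1 else 0) *\<^sub>R snd (B l) c)"
            using 2 J4 Bl by simp
        qed
      next
        case 3
        define j0 where "j0 = (if i < l' then i else i - 1)"
        have j0k: "j0 < m - 1" using i ll 3 by (auto simp: j0_def)
        have Bj0: "B j0 = Pt i" using ll 3 by (auto simp: j0_def B_def)
        show ?thesis
        proof (rule simulable_by_one[where jz = j0 and h = "\<lambda>j c. if j = j0 then c else 0"])
          show "j0 < m - 1" by fact
          show "\<forall>j<m - 1. \<forall>c<fst (B j). (if j = j0 then c else 0) < fst (Pt i)"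
            using Ppos i Bj0 by auto
          show "\<forall>ia<fst (Pt i). snd (Pt i) ia = (\<Sum>c<fst (B j0). (if (if j0 = j0 then c else 0) = ia then 1 else 0) *\<^sub>R snd (B j0) c)"
            unfolding Bj0 scaleR_if01 by (simp add: sum.delta)
        qed
      qed
    qed
    show "t \<in> ?R"
      using t01 Bpovm sim unfolding Pt_def by blast
  qed
qed

end
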